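(* Let $N\ge 1$ be an integer, let $T=\tau_N>\tau_{N-1}>\cdots>\tau_1>0$ be a decreasing sequence of positive noise levels, let $\eta\in[0,1]$, let $\xi\in\{-1,1\}$, and fix $\mathbf{x}_0\in\mathbb{R}^d$. Consider the joint distribution of $(\mathbf{x}_{\tau_1},\dots,\mathbf{x}_{\tau_N})$ given $\mathbf{x}_0$ defined by $$q_{\eta}(\mathbf{x}_{\tau_1:\tau_N}\mid \mathbf{x}_0)=q_{\eta}(\mathbf{x}_{\tau_N}\mid\mathbf{x}_0)\prod_{n=2}^{N} q_{\eta}(\mathbf{x}_{\tau_{n-1}}\mid \mathbf{x}_{\tau_n},\mathbf{x}_0),$$ where $q_{\eta}(\mathbf{x}_{\tau_N}\mid\mathbf{x}_0)=\mathcal{N}(\mathbf{x}_0,\tau_N^2\mathbf{I})$ and, for every $n\in\{2,\dots,N\}$, $$q_{\eta}(\mathbf{x}_{\tau_{n-1}}\mid \mathbf{x}_{\tau_n},\mathbf{x}_0)=\mathcal{N}\!\left(\mathbf{x}_0+\xi\sqrt{1-\eta^2}\,\tau_{n-1}\,\frac{\mathbf{x}_0-\mathbf{x}_{\tau_n}}{\tau_n},\ \eta^2\tau_{n-1}^2\mathbf{I}\right).$$ Then for every $n\in\{1,\dots,N\}$ the marginal satisfies $q_{\eta}(\mathbf{x}_{\tau_n}\mid\mathbf{x}_0)=\mathcal{N}(\mathbf{x}_0,\tau_n^2\mathbf{I})$. In particular this holds both for $\xi=-1$ (the DDIM choice, with mean $\mathbf{x}_0+\sqrt{1-\eta^2}\tau_{n-1}(\mathbf{x}_{\tau_n}-\mathbf{x}_0)/\tau_n$)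 and for $\xi=1$ (the sign-flipped choice, with mean $\mathbf{x}_0+\sqrt{1-\eta^2}\tau_{n-1}(\mathbf{x}_0-\mathbf{x}_{\tau_n})/\tau_n$).
   Context: $\mathcal{N}(\boldsymbol{\mu},\boldsymbol{\Sigma})$ denotes the multivariate Gaussian distribution on $\mathbb{R}^d$ with mean $\boldsymbol{\mu}$ and covariance $\boldsymbol{\Sigma}$, and $\mathbf{I}$ is the $d\times d$ identity matrix. The marginal $q_{\eta}(\mathbf{x}_{\tau_n}\mid\mathbf{x}_0)$ is the distribution of $\mathbf{x}_{\tau_n}$ under the joint distribution $q_{\eta}(\mathbf{x}_{\tau_1:\tau_N}\mid\mathbf{x}_0)$. *)

theory Defs
  imports "HOL-Probability.Probability"
begin

text \<open>Vectors in R^d are functions from a finite index type 'd to real.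
  The Borel measurable space of R^d is the finite product of Borel lines.\<close>

definition vec_space :: "('d::finite \<Rightarrow> real) measure" where
  "vec_space = PiM UNIV (\<lambda>_. borel)"

definition normal1 :: "real \<Rightarrow> real \<Rightarrow> real measure" where
  "normal1 m s = (if s = 0 then return borel m else density lborel (normal_density m s))"

definition gauss :: "('d::finite \<Rightarrow> real) \<Rightarrow> real \<Rightarrow> ('d \<Rightarrow> real) measure" where
  "gauss mu s = PiM UNIV (\<lambda>i. normal1 (mu i) s)"

definition step_kernel ::
  "('d::finite \<Rightarrow> real) \<Rightarrow> real \<Rightarrow> real \<Rightarrow> (nat \<Rightarrow> real) \<Rightarrow> nat \<Rightarrow> ('d \<Rightarrow> real) \<Rightarrow> ('d \<Rightarrow> real) measure" where
  "step_kernel x0 eta xi tau n x =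
     gauss (\<lambda>i. x0 i + xi * sqrt (1 - eta\<^sup>2) * tau (n - 1) * (x0 i - x i) / tau n) (eta * tau (n - 1))"

text \<open>Path space for the variables with indices in K (an extensional function K -> R^d).\<close>

definition path_space :: "nat set \<Rightarrow> (nat \<Rightarrow> ('d::finite \<Rightarrow> real)) measure" where
  "path_space K = PiM K (\<lambda>_. vec_space)"

text \<open>Partial joint law of (x_{tau_{N-j}}, ..., x_{tau_N}) given x_0, built as
  q(x_{tau_N}|x_0) followed by j transitions.\<close>

fun partial_joint ::
  "('d::finite \<Rightarrow> real) \<Rightarrow> real \<Rightarrow> real \<Rightarrow> (nat \<Rightarrow> real) \<Rightarrow> nat \<Rightarrow> nat \<Rightarrow> (nat \<Rightarrow> ('d \<Rightarrow> real)) measure" where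
  "partial_joint x0 eta xi tau N 0 =
     distr (gauss x0 (tau N)) (path_space {N..N}) (\<lambda>y n. if n = N then y else undefined)"
| "partial_joint x0 eta xi tau N (Suc j) =
     partial_joint x0 eta xi tau N j \<bind>
       (\<lambda>\<omega>. distr (step_kernel x0 eta xi tau (N - j) (\<omega> (N - j)))
                  (path_space {N - Suc j..N}) (\<lambda>y. fun_upd \<omega> (N - Suc j) y))"

definition joint :: "('d::finite \<Rightarrow> real) \<Rightarrow> real \<Rightarrow> real \<Rightarrow> (nat \<Rightarrow> real) \<Rightarrow> nat \<Rightarrow> (nat \<Rightarrow> ('d \<Rightarrow> real)) measure" where
  "joint x0 eta xi tau N = partial_joint x0 eta xi tau N (N - 1)"

definition marginal :: "('d::finite \<Rightarrow> real) \<Rightarrow> real \<Rightarrow> real \<Rightarrow> (nat \<Rightarrow> real) \<Rightarrow> nat \<Rightarrow> nat \<Rightarrow> ('d \<Rightarrow> real) measure" where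
  "marginal x0 eta xi tau N n = distr (joint x0 eta xi tau N) vec_space (\<lambda>\<omega>. \<omega> n)"

end

theory Submission
  imports Defs
begin

definition std1 :: "real measure" where "std1 = normal1 0 1"

lemma std1_eq: "std1 = density lborel (normal_density 0 1)"
  by (simp add: std1_def normal1_def)

lemma prob_std1: "prob_space std1"
  by (simp add: std1_eq prob_space_normal_density)

lemma sets_std1[measurable_cong, simp]: "sets std1 = sets borel"
  by (simp add: std1_eq)

lemma space_std1[simp]: "space std1 = UNIV"
  by (simp add: std1_eq)

lemma prob_normal1: "0 \<le> s \<Longrightarrow> prob_space (normal1 m s)"
  by (auto simp: normal1_def intro: prob_space_normal_density prob_space_return)

lemma sets_normal1[measurable_cong, simp]: "sets (normal1 m s) = sets borel"
  by (simp add: normal1_def)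

lemma space_normal1[simp]: "space (normal1 m s) = UNIV"
  by (simp add: normal1_def)

lemma distr_std1_lborel:
  assumes "a \<noteq> 0"
  shows "distr std1 lborel (\<lambda>z. m + a * z) = density lborel (normal_density m \<bar>a\<bar>)"
proof -
  interpret prob_space std1 by (rule prob_std1)
  have d: "distributed std1 lborel (\<lambda>z. z) (normal_density 0 1)"
    unfolding distributed_def
    by (auto simp: std1_eq distr_id2 intro: measurable_ident_sets)
  have "distributed std1 lborel (\<lambda>z. m + a * z) (normal_density (m + a * 0) (\<bar>a\<bar> * 1))"
    by (rule normal_density_affine[OF d]) (use assms in auto)
  then show ?thesis by (simp add: distributed_def)
qed

lemma distr_std1:
  "distr std1 borel (\<lambda>z. m + a * z) = normal1 m \<bar>a\<bar>"
proof (cases "a = 0")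
  case True
  interpret prob_space std1 by (rule prob_std1)
  show ?thesis using True by (simp add: normal1_def)
next
  case False
  have "distr std1 borel (\<lambda>z. m + a * z) = distr std1 lborel (\<lambda>z. m + a * z)"
    by (rule distr_cong) auto
  also have "\<dots> = density lborel (normal_density m \<bar>a\<bar>)" using distr_std1_lborel[OF False] .
  finally show ?thesis using False by (simp add: normal1_def)
qed

lemma bind_distr_pair:
  assumes P1: "prob_space M1" and P2: "prob_space M2"
    and g[measurable]: "g \<in> measurable (M1 \<Otimes>\<^sub>M M2) N"
  shows "M1 \<bind> (\<lambda>z. distr M2 N (\<lambda>w. g (z, w))) = distr (M1 \<Otimes>\<^sub>M M2) N g"
proof -
  interpret p1: prob_space M1 by (rule P1)
  interpret p2: prob_space M2 by (rule P2)
  have K: "(\<lambda>z. distr M2 N (\<lambda>w. g (z, w))) \<in> measurable M1 (subprob_algebra N)"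
    by (rule measurable_distr2[where g="\<lambda>_. M2" and M=M2]) (auto intro: measurable_const p2.M_in_subprob)
  show ?thesis
  proof (rule measure_eqI)
    show "sets (M1 \<bind> (\<lambda>z. distr M2 N (\<lambda>w. g (z, w)))) = sets (distr (M1 \<Otimes>\<^sub>M M2) N g)"
      by (subst sets_bind) (auto simp: p1.not_empty)
  next
    fix A assume A: "A \<in> sets (M1 \<bind> (\<lambda>z. distr M2 N (\<lambda>w. g (z, w))))"
    then have A': "A \<in> sets N" by (subst (asm) sets_bind) (auto simp: p1.not_empty)
    have "emeasure (M1 \<bind> (\<lambda>z. distr M2 N (\<lambda>w. g (z, w)))) A
        = (\<integral>\<^sup>+z. emeasure (distr M2 N (\<lambda>w. g (z, w))) A \<partial>M1)"
      by (rule emeasure_bind[OF p1.not_empty K A'])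
    also have "\<dots> = (\<integral>\<^sup>+z. emeasure M2 (Pair z -` (g -` A \<inter> space (M1 \<Otimes>\<^sub>M M2))) \<partial>M1)"
    proof (rule nn_integral_cong)
      fix z assume z: "z \<in> space M1"
      have "(\<lambda>w. g (z, w)) \<in> measurable M2 N" using z by measurable
      then have "emeasure (distr M2 N (\<lambda>w. g (z, w))) A = emeasure M2 ((\<lambda>w. g (z, w)) -` A \<inter> space M2)"
        by (rule emeasure_distr) (rule A')
      also have "(\<lambda>w. g (z, w)) -` A \<inter> space M2 = Pair z -` (g -` A \<inter> space (M1 \<Otimes>\<^sub>M M2))"
        using z by (auto simp: space_pair_measure)
      finally show "emeasure (distr M2 N (\<lambda>w. g (z, w))) A = emeasure M2 (Pair z -` (g -` A \<inter> space (M1 \<Otimes>\<^sub>M M2)))" .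
    qed
    also have "\<dots> = emeasure (M1 \<Otimes>\<^sub>M M2) (g -` A \<inter> space (M1 \<Otimes>\<^sub>M M2))"
      by (rule p2.emeasure_pair_measure_alt[symmetric]) (use A' in measurable)
    also have "\<dots> = emeasure (distr (M1 \<Otimes>\<^sub>M M2) N g) A"
      by (rule emeasure_distr[symmetric]) (use A' in auto)
    finally show "emeasure (M1 \<bind> (\<lambda>z. distr M2 N (\<lambda>w. g (z, w)))) A = emeasure (distr (M1 \<Otimes>\<^sub>M M2) N g) A" .
  qed
qed

abbreviation "P2 \<equiv> std1 \<Otimes>\<^sub>M std1"

lemma prob_P2: "prob_space P2"
  using prob_std1 by (intro prob_space_pair)

lemma P2_fst: "distr P2 borel fst = std1"
proof (rule measure_eqI)
  interpret prob_space std1 by (rule prob_std1)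
  interpret pair_prob_space std1 std1 by unfold_locales
  fix A assume A: "A \<in> sets (distr P2 borel fst)"
  then have "fst -` A \<inter> space P2 = A \<times> UNIV" by (auto simp: space_pair_measure)
  moreover have "emeasure P2 (A \<times> space std1) = emeasure std1 A"
  proof -
    have "emeasure P2 (A \<times> space std1) = emeasure std1 A * emeasure std1 (space std1)"
      using A by (intro sigma_finite_measure.emeasure_pair_measure_Times prob_space_imp_sigma_finite prob_std1) auto
    then show ?thesis using prob_space.emeasure_space_1[OF prob_std1] by simp
  qed
  ultimately show "emeasure (distr P2 borel fst) A = emeasure std1 A"
    using A by (simp add: emeasure_distr)
qed simp

lemma P2_snd: "distr P2 borel snd = std1"
proof (rule measure_eqI)
  interpret prob_space std1 by (rule prob_std1)
  interpret pair_prob_space std1 std1 by unfold_locales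
  fix A assume A: "A \<in> sets (distr P2 borel snd)"
  then have "snd -` A \<inter> space P2 = UNIV \<times> A" by (auto simp: space_pair_measure)
  moreover have "emeasure P2 (space std1 \<times> A) = emeasure std1 A"
  proof -
    have "emeasure P2 (space std1 \<times> A) = emeasure std1 (space std1) * emeasure std1 A"
      using A by (intro sigma_finite_measure.emeasure_pair_measure_Times prob_space_imp_sigma_finite prob_std1) auto
    then show ?thesis using prob_space.emeasure_space_1[OF prob_std1] by simp
  qed
  ultimately show "emeasure (distr P2 borel snd) A = emeasure std1 A"
    using A by (simp add: emeasure_distr)
qed simp

lemma P2_indep: "prob_space.indep_var P2 borel fst borel snd"
proof -
  interpret prob_space P2 by (rule prob_P2)
  show ?thesis
    by (subst indep_var_distribution_eq) (auto simp: P2_fst P2_snd intro!: distr_id2[symmetric, simplified])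
qed

lemma L_pair:
  "distr P2 borel (\<lambda>p. m + a * fst p + b * snd p) = normal1 m (sqrt (a\<^sup>2 + b\<^sup>2))"
proof -
  interpret prob_space P2 by (rule prob_P2)
  consider "a = 0" | "b = 0" | "a \<noteq> 0" "b \<noteq> 0" by blast
  then show ?thesis
  proof cases
    case 1
    have "distr P2 borel (\<lambda>p. m + a * fst p + b * snd p) = distr (distr P2 borel snd) borel (\<lambda>w. m + b * w)"
      using 1 by (subst distr_distr) (auto simp: comp_def)
    then show ?thesis using 1 by (simp add: P2_snd distr_std1)
  next
    case 2
    have "distr P2 borel (\<lambda>p. m + a * fst p + b * snd p) = distr (distr P2 borel fst) borel (\<lambda>w. m + a * w)"
      using 2 by (subst distr_distr) (auto simp: comp_def)
    then show ?thesis using 2 by (simp add: P2_fst distr_std1)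
  next
    case 3
    have dX: "distributed P2 lborel (\<lambda>p. 0 + a * fst p) (normal_density 0 \<bar>a\<bar>)"
    proof -
      have "distr P2 lborel (\<lambda>p. 0 + a * fst p) = distr (distr P2 borel fst) lborel (\<lambda>w. 0 + a * w)"
        by (subst distr_distr) (auto simp: comp_def)
      then show ?thesis using 3 by (simp add: distributed_def P2_fst distr_std1_lborel[of a 0, simplified])
    qed
    have dY: "distributed P2 lborel (\<lambda>p. m + b * snd p) (normal_density m \<bar>b\<bar>)"
    proof -
      have "distr P2 lborel (\<lambda>p. m + b * snd p) = distr (distr P2 borel snd) lborel (\<lambda>w. m + b * w)"
        by (subst distr_distr) (auto simp: comp_def)
      then show ?thesis using 3 by (simp add: distributed_def P2_snd distr_std1_lborel)
    qed
    have ind: "indep_var borel (\<lambda>p. 0 + a * fst p) borel (\<lambda>p. m + b * snd p)"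
    proof -
      have "indep_var borel ((\<lambda>w. 0 + a * w) \<circ> fst) borel ((\<lambda>w. m + b * w) \<circ> snd)"
        by (rule indep_var_compose[OF P2_indep]) auto
      then show ?thesis by (simp add: comp_def)
    qed
    have "distributed P2 lborel (\<lambda>p. (0 + a * fst p) + (m + b * snd p)) (normal_density (0 + m) (sqrt (\<bar>a\<bar>\<^sup>2 + \<bar>b\<bar>\<^sup>2)))"
      by (rule add_indep_normal[OF ind _ _ dX dY]) (use 3 in auto)
    then have "distr P2 lborel (\<lambda>p. m + a * fst p + b * snd p) = density lborel (normal_density m (sqrt (a\<^sup>2 + b\<^sup>2)))"
      by (simp add: distributed_def algebra_simps)
    moreover have "distr P2 borel (\<lambda>p. m + a * fst p + b * snd p) = distr P2 lborel (\<lambda>p. m + a * fst p + b * snd p)"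
      by (rule distr_cong) auto
    moreover have "sqrt (a\<^sup>2 + b\<^sup>2) \<noteq> 0" using 3 by simp
    ultimately show ?thesis using 3 by (simp add: normal1_def)
  qed
qed

lemma normal1_distr: "0 \<le> s \<Longrightarrow> normal1 m s = distr std1 borel (\<lambda>z. m + s * z)"
  using distr_std1[of m s] by simp

lemma kern1_meas:
  assumes [measurable]: "f \<in> borel_measurable borel" and s: "0 \<le> s"
  shows "(\<lambda>a. normal1 (f a) s) \<in> measurable borel (subprob_algebra borel)"
proof -
  have "(\<lambda>a. distr std1 borel (\<lambda>w. f a + s * w)) \<in> measurable borel (subprob_algebra borel)"
    by (rule measurable_distr2[where g="\<lambda>_. std1" and M=std1])
       (auto intro!: measurable_const prob_space.M_in_subprob[OF prob_std1, simplified])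
  then show ?thesis using normal1_distr[OF s] by simp
qed

lemma conv1:
  assumes t: "0 \<le> t" and s: "0 \<le> s"
  shows "normal1 m t \<bind> (\<lambda>a. normal1 (m + c * (m - a)) s) = normal1 m (sqrt ((c * t)\<^sup>2 + s\<^sup>2))"
proof -
  have K: "(\<lambda>a. normal1 (m + c * (m - a)) s) \<in> measurable borel (subprob_algebra borel)"
    by (rule kern1_meas[OF _ s]) simp
  have "normal1 m t \<bind> (\<lambda>a. normal1 (m + c * (m - a)) s)
      = distr std1 borel (\<lambda>z. m + t * z) \<bind> (\<lambda>a. normal1 (m + c * (m - a)) s)"
    by (simp add: normal1_distr[OF t])
  also have "\<dots> = std1 \<bind> (\<lambda>z. normal1 (m + c * (m - (m + t * z))) s)"
    by (rule bind_distr[OF _ K]) auto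
  also have "\<dots> = std1 \<bind> (\<lambda>z. distr std1 borel (\<lambda>w. (\<lambda>p. m + (- c * t) * fst p + s * snd p) (z, w)))"
    by (simp add: normal1_distr[OF s] algebra_simps)
  also have "\<dots> = distr P2 borel (\<lambda>p. m + (- c * t) * fst p + s * snd p)"
    by (rule bind_distr_pair[OF prob_std1 prob_std1]) simp
  also have "\<dots> = normal1 m (sqrt ((c * t)\<^sup>2 + s\<^sup>2))"
    using L_pair[of m "- c * t" s] by (simp add: power_mult_distrib)
  finally show ?thesis .
qed

definition StdV :: "('d::finite \<Rightarrow> real) measure" where
  "StdV = PiM UNIV (\<lambda>_. std1)"

lemma sets_vec_space[measurable_cong]: "sets (vec_space :: ('d::finite \<Rightarrow> real) measure) = sets (PiM UNIV (\<lambda>_::'d. borel))"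
  by (simp add: vec_space_def)

lemma sets_gauss[measurable_cong, simp]: "sets (gauss mu s) = sets vec_space"
  unfolding gauss_def vec_space_def by (rule sets_PiM_cong) auto

lemma space_gauss[simp]: "space (gauss mu s) = space vec_space"
  using sets_gauss sets_eq_imp_space_eq by blast

lemma space_vec_space[simp]: "space vec_space = UNIV"
  by (simp add: vec_space_def space_PiM)

lemma prob_gauss: "0 \<le> s \<Longrightarrow> prob_space (gauss mu s)"
  unfolding gauss_def by (intro prob_space_PiM prob_normal1)

lemma prob_StdV: "prob_space StdV"
  unfolding StdV_def by (intro prob_space_PiM prob_std1)

lemma psf_normal1: "0 \<le> s \<Longrightarrow> product_sigma_finite (\<lambda>i. normal1 (mu i) s)"
  unfolding product_sigma_finite_def
  by (auto intro: prob_space_imp_sigma_finite prob_normal1)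

lemma psf_std1: "product_sigma_finite (\<lambda>i. std1)"
  unfolding product_sigma_finite_def
  by (auto intro: prob_space_imp_sigma_finite prob_std1)

lemma gauss_distr:
  fixes mu :: "'d::finite \<Rightarrow> real"
  assumes s: "0 \<le> s"
  shows "gauss mu s = distr StdV vec_space (\<lambda>z i. mu i + s * z i)"
proof -
  interpret psf: product_sigma_finite "\<lambda>i. normal1 (mu i) s" by (rule psf_normal1[OF s])
  interpret ps1: product_sigma_finite "\<lambda>i. std1" by (rule psf_std1)
  have meas: "(\<lambda>z i. mu i + s * z i) \<in> measurable StdV vec_space"
    unfolding StdV_def vec_space_def
    by (rule measurable_PiM_single'[where f="\<lambda>i z. mu i + s * z i"]) (auto simp: space_PiM)
  show ?thesis unfolding gauss_def
  proof (rule psf.PiM_eqI[symmetric])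
    show "finite (UNIV :: 'd set)" by simp
    show "sets (distr StdV vec_space (\<lambda>z i. mu i + s * z i)) = sets (PiM UNIV (\<lambda>i. normal1 (mu i) s))"
      by (simp add: vec_space_def cong: sets_PiM_cong)
  next
    fix A :: "'d \<Rightarrow> real set" assume A: "\<And>i. i \<in> UNIV \<Longrightarrow> A i \<in> sets (normal1 (mu i) s)"
    have A': "Pi\<^sub>E UNIV A \<in> sets vec_space" unfolding vec_space_def
      using A by (intro sets_PiM_I_finite) auto
    have "emeasure (distr StdV vec_space (\<lambda>z i. mu i + s * z i)) (Pi\<^sub>E UNIV A)
        = emeasure StdV ((\<lambda>z i. mu i + s * z i) -` Pi\<^sub>E UNIV A \<inter> space StdV)"
      by (rule emeasure_distr[OF meas A'])
    also have "(\<lambda>z i. mu i + s * z i) -` Pi\<^sub>E UNIV A \<inter> space StdV = Pi\<^sub>E UNIV (\<lambda>i. (\<lambda>z. mu i + s * z) -` A i)"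
      by (auto simp: StdV_def space_PiM)
    also have "emeasure StdV (Pi\<^sub>E UNIV (\<lambda>i. (\<lambda>z. mu i + s * z) -` A i)) = (\<Prod>i\<in>UNIV. emeasure std1 ((\<lambda>z. mu i + s * z) -` A i))"
    proof -
      have pre: "(\<lambda>z. mu i + s * z) -` A i \<in> sets borel" for i
        using measurable_sets[of "\<lambda>z. mu i + s * z" borel borel "A i"] A by simp
      show ?thesis unfolding StdV_def using pre by (intro ps1.emeasure_PiM) auto
    qed
    also have "\<dots> = (\<Prod>i\<in>UNIV. emeasure (normal1 (mu i) s) (A i))"
    proof (rule prod.cong[OF refl])
      fix i
      have "emeasure (normal1 (mu i) s) (A i) = emeasure (distr std1 borel (\<lambda>z. mu i + s * z)) (A i)"
        by (simp add: normal1_distr[OF s])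
      also have "\<dots> = emeasure std1 ((\<lambda>z. mu i + s * z) -` A i \<inter> space std1)"
        using A by (intro emeasure_distr) auto
      finally show "emeasure std1 ((\<lambda>z. mu i + s * z) -` A i) = emeasure (normal1 (mu i) s) (A i)" by simp
    qed
    finally show "emeasure (distr StdV vec_space (\<lambda>z i. mu i + s * z i)) (Pi\<^sub>E UNIV A) = (\<Prod>i\<in>UNIV. emeasure (normal1 (mu i) s) (A i))" .
  qed
qed

lemma kernV_meas:
  fixes x0 :: "'d::finite \<Rightarrow> real"
  assumes s: "0 \<le> s"
  shows "(\<lambda>x. gauss (\<lambda>i. x0 i + c * (x0 i - x i)) s) \<in> measurable vec_space (subprob_algebra vec_space)"
proof -
  have "(\<lambda>x. distr StdV vec_space (\<lambda>z i. x0 i + c * (x0 i - x i) + s * z i)) \<in> measurable vec_space (subprob_algebra vec_space)"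
  proof (rule measurable_distr2[where g="\<lambda>_. StdV" and M=StdV])
    show "(\<lambda>_. StdV) \<in> measurable vec_space (subprob_algebra StdV)"
      by (intro measurable_const prob_space.M_in_subprob[OF prob_StdV])
    show "(\<lambda>(x, z) i. x0 i + c * (x0 i - x i) + s * z i) \<in> measurable (vec_space \<Otimes>\<^sub>M StdV) vec_space"
    proof -
      have eq: "(\<lambda>(x, z) i. x0 i + c * (x0 i - x i) + s * z i) = (\<lambda>p i. x0 i + c * (x0 i - fst p i) + s * snd p i)"
        by auto
      have "(\<lambda>p i. x0 i + c * (x0 i - fst p i) + s * snd p i) \<in> measurable (Pi\<^sub>M UNIV (\<lambda>_. borel) \<Otimes>\<^sub>M Pi\<^sub>M UNIV (\<lambda>_. std1)) (Pi\<^sub>M UNIV (\<lambda>_::'d. borel))"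
      proof (rule measurable_PiM_single'[where f="\<lambda>i p. x0 i + c * (x0 i - fst p i) + s * snd p i"])
        fix i :: 'd
        show "(\<lambda>p. x0 i + c * (x0 i - fst p i) + s * snd p i) \<in> measurable (Pi\<^sub>M UNIV (\<lambda>_. borel) \<Otimes>\<^sub>M Pi\<^sub>M UNIV (\<lambda>_. std1)) borel"
          by measurable
      qed (auto simp: space_PiM)
      then show ?thesis unfolding eq vec_space_def StdV_def .
    qed
  qed
  moreover have "(\<lambda>x. gauss (\<lambda>i. x0 i + c * (x0 i - x i)) s) = (\<lambda>x. distr StdV vec_space (\<lambda>z i. x0 i + c * (x0 i - x i) + s * z i))"
    by (rule ext) (rule gauss_distr[OF s])
  ultimately show ?thesis by simp
qed

lemma core:
  fixes x0 :: "'d::finite \<Rightarrow> real"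
  assumes t: "0 \<le> t" and s: "0 \<le> s"
  shows "gauss x0 t \<bind> (\<lambda>x. gauss (\<lambda>i. x0 i + c * (x0 i - x i)) s) = gauss x0 (sqrt ((c * t)\<^sup>2 + s\<^sup>2))"
proof -
  define r where "r = sqrt ((c * t)\<^sup>2 + s\<^sup>2)"
  have r: "0 \<le> r" by (simp add: r_def)
  interpret psf: product_sigma_finite "\<lambda>i. normal1 (x0 i) r" by (rule psf_normal1[OF r])
  interpret pst: product_sigma_finite "\<lambda>i. normal1 (x0 i) t" by (rule psf_normal1[OF t])
  interpret pg: prob_space "gauss x0 t" by (rule prob_gauss[OF t])
  have K: "(\<lambda>x. gauss (\<lambda>i. x0 i + c * (x0 i - x i)) s) \<in> measurable (gauss x0 t) (subprob_algebra vec_space)"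
    using kernV_meas[OF s, of x0 c] by (simp cong: measurable_cong_sets)
  have K1: "(\<lambda>a. normal1 (x0 i + c * (x0 i - a)) s) \<in> measurable borel (subprob_algebra borel)" for i
    by (rule kern1_meas[OF _ s]) simp
  show ?thesis unfolding r_def[symmetric] unfolding gauss_def[of x0 r]
  proof (rule psf.PiM_eqI)
    show "finite (UNIV :: 'd set)" by simp
    show "sets (gauss x0 t \<bind> (\<lambda>x. gauss (\<lambda>i. x0 i + c * (x0 i - x i)) s)) = sets (PiM UNIV (\<lambda>i. normal1 (x0 i) r))"
      by (subst sets_bind[where N=vec_space]) (auto simp: pg.not_empty vec_space_def cong: sets_PiM_cong)
  next
    fix A :: "'d \<Rightarrow> real set" assume A: "\<And>i. i \<in> UNIV \<Longrightarrow> A i \<in> sets (normal1 (x0 i) r)"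
    have A': "Pi\<^sub>E UNIV A \<in> sets vec_space" unfolding vec_space_def
      using A by (intro sets_PiM_I_finite) auto
    have "emeasure (gauss x0 t \<bind> (\<lambda>x. gauss (\<lambda>i. x0 i + c * (x0 i - x i)) s)) (Pi\<^sub>E UNIV A)
        = (\<integral>\<^sup>+x. emeasure (gauss (\<lambda>i. x0 i + c * (x0 i - x i)) s) (Pi\<^sub>E UNIV A) \<partial>gauss x0 t)"
      by (rule emeasure_bind[OF pg.not_empty K A'])
    also have "\<dots> = (\<integral>\<^sup>+x. (\<Prod>i\<in>UNIV. emeasure (normal1 (x0 i + c * (x0 i - x i)) s) (A i)) \<partial>gauss x0 t)"
    proof (rule nn_integral_cong)
      fix x :: "'d \<Rightarrow> real"
      interpret pk: product_sigma_finite "\<lambda>i. normal1 (x0 i + c * (x0 i - x i)) s" by (rule psf_normal1[OF s])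
      show "emeasure (gauss (\<lambda>i. x0 i + c * (x0 i - x i)) s) (Pi\<^sub>E UNIV A) = (\<Prod>i\<in>UNIV. emeasure (normal1 (x0 i + c * (x0 i - x i)) s) (A i))"
        unfolding gauss_def using A by (intro pk.emeasure_PiM) auto
    qed
    also have "\<dots> = (\<Prod>i\<in>UNIV. \<integral>\<^sup>+a. emeasure (normal1 (x0 i + c * (x0 i - a)) s) (A i) \<partial>normal1 (x0 i) t)"
      unfolding gauss_def
    proof (rule pst.product_nn_integral_prod)
      show "finite (UNIV :: 'd set)" by simp
      fix i :: 'd
      show "(\<lambda>a. emeasure (normal1 (x0 i + c * (x0 i - a)) s) (A i)) \<in> borel_measurable (normal1 (x0 i) t)"
        using measurable_emeasure_subprob_algebra[OF A[of i, simplified, folded sets_normal1]] K1[of i]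
        by (simp cong: measurable_cong_sets)
    qed
    also have "\<dots> = (\<Prod>i\<in>UNIV. emeasure (normal1 (x0 i) t \<bind> (\<lambda>a. normal1 (x0 i + c * (x0 i - a)) s)) (A i))"
    proof (rule prod.cong[OF refl])
      fix i :: 'd
      show "(\<integral>\<^sup>+a. emeasure (normal1 (x0 i + c * (x0 i - a)) s) (A i) \<partial>normal1 (x0 i) t) = emeasure (normal1 (x0 i) t \<bind> (\<lambda>a. normal1 (x0 i + c * (x0 i - a)) s)) (A i)"
        using A[of i] K1[of i]
        by (intro emeasure_bind[symmetric]) (auto cong: measurable_cong_sets)
    qed
    also have "\<dots> = (\<Prod>i\<in>UNIV. emeasure (normal1 (x0 i) r) (A i))"
      by (simp add: conv1[OF t s] r_def)
    finally show "emeasure (gauss x0 t \<bind> (\<lambda>x. gauss (\<lambda>i. x0 i + c * (x0 i - x i)) s)) (Pi\<^sub>E UNIV A) = (\<Prod>i\<in>UNIV. emeasure (normal1 (x0 i) r) (A i))" .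
  qed
qed

lemma step_eq:
  "step_kernel x0 eta xi tau n x = gauss (\<lambda>i. x0 i + (xi * sqrt (1 - eta\<^sup>2) * tau (n - 1) / tau n) * (x0 i - x i)) (eta * tau (n - 1))"
  unfolding step_kernel_def by (simp add: field_simps)

lemma sets_path_space[measurable_cong]: "sets (path_space K :: (nat \<Rightarrow> 'd::finite \<Rightarrow> real) measure) = sets (PiM K (\<lambda>_. vec_space))"
  by (simp add: path_space_def)

lemma Kj_meas:
  fixes x0 :: "'d::finite \<Rightarrow> real"
  assumes s: "0 \<le> eta * tau (n - 1)" and m: "m \<notin> K" and n: "n \<in> K"
  shows "(\<lambda>\<omega>. distr (step_kernel x0 eta xi tau n (\<omega> n)) (path_space (insert m K)) (\<lambda>y. fun_upd \<omega> m y))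
     \<in> measurable (path_space K) (subprob_algebra (path_space (insert m K)))"
proof (rule measurable_distr2[where M=vec_space])
  show "(\<lambda>(\<omega>, y). fun_upd \<omega> m y) \<in> measurable (path_space K \<Otimes>\<^sub>M vec_space) (path_space (insert m K))"
  proof -
    have "(\<lambda>p. fun_upd (fst p) m (snd p)) \<in> measurable (path_space K \<Otimes>\<^sub>M vec_space) (PiM (insert m K) (\<lambda>_. vec_space))"
      by (rule measurable_fun_upd[where J=K]) (auto simp: path_space_def)
    then show ?thesis by (simp add: path_space_def split_beta')
  qed
  have "(\<lambda>\<omega>. gauss (\<lambda>i. x0 i + (xi * sqrt (1 - eta\<^sup>2) * tau (n - 1) / tau n) * (x0 i - (\<omega> n) i)) (eta * tau (n - 1)))
      \<in> measurable (path_space K) (subprob_algebra vec_space)"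
    by (rule measurable_compose[OF _ kernV_meas[OF s]]) (use n in \<open>simp add: path_space_def\<close>)
  then show "(\<lambda>\<omega>. step_kernel x0 eta xi tau n (\<omega> n)) \<in> measurable (path_space K) (subprob_algebra vec_space)"
    by (simp add: step_eq)
qed

lemma main_ind:
  fixes x0 :: "'d::finite \<Rightarrow> real" and tau :: "nat \<Rightarrow> real"
  assumes pos: "\<forall>n\<in>{1..N}. tau n > 0" and eta: "0 \<le> eta" "eta \<le> 1" and xi: "xi \<in> {-1, 1}"
    and N: "N \<ge> 1"
  shows "j \<le> N - 1 \<Longrightarrow> prob_space (partial_joint x0 eta xi tau N j)
      \<and> sets (partial_joint x0 eta xi tau N j) = sets (path_space {N - j..N} :: (nat \<Rightarrow> 'd \<Rightarrow> real) measure)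
      \<and> (\<forall>k\<le>j. distr (partial_joint x0 eta xi tau N j) vec_space (\<lambda>\<omega>. \<omega> (N - k)) = gauss x0 (tau (N - k)))"
proof (induction j)
  case 0
  have tN: "0 \<le> tau N" using pos N by (metis atLeastAtMost_iff le_refl less_imp_le)
  interpret g: prob_space "gauss x0 (tau N)" by (rule prob_gauss[OF tN])
  have meas: "(\<lambda>y n. if n = N then y else undefined) \<in> measurable (gauss x0 (tau N)) (path_space {N..N} :: (nat \<Rightarrow> 'd \<Rightarrow> real) measure)"
    unfolding path_space_def
    by (rule measurable_PiM_single'[where f="\<lambda>n y. if n = N then y else undefined"])
       (auto simp: space_PiM cong: measurable_cong_sets)
  have "distr (distr (gauss x0 (tau N)) (path_space {N..N}) (\<lambda>y n. if n = N then y else undefined)) vec_space (\<lambda>\<omega>. \<omega> N)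
      = distr (gauss x0 (tau N)) vec_space (\<lambda>y. y)"
    by (subst distr_distr[OF _ meas]) (auto simp: path_space_def comp_def)
  also have "\<dots> = gauss x0 (tau N)" by (rule distr_id2) simp
  finally show ?case
    using meas by (auto intro: g.prob_space_distr)
next
  case (Suc j)
  then have jN: "j \<le> N - 1" and j2: "Suc j \<le> N - 1" by auto
  note IH = Suc.IH[OF jN]
  define PJ where "PJ = partial_joint x0 eta xi tau N j"
  define n where "n = N - j"
  have n2: "n \<ge> 2" "n \<le> N" using j2 by (auto simp: n_def)
  have nm: "N - Suc j = n - 1" by (simp add: n_def)
  have tn: "tau n > 0" "tau (n - 1) > 0" proof -
    have "n \<in> {1..N}" "n - 1 \<in> {1..N}" using n2 by auto
    then show "tau n > 0" "tau (n - 1) > 0" using pos by blast+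
  qed
  define c where "c = xi * sqrt (1 - eta\<^sup>2) * tau (n - 1) / tau n"
  define s where "s = eta * tau (n - 1)"
  have s0: "0 \<le> s" using eta tn by (simp add: s_def)
  interpret PJ: prob_space PJ using IH by (simp add: PJ_def)
  have setsPJ: "sets PJ = sets (path_space {n..N} :: (nat \<Rightarrow> 'd \<Rightarrow> real) measure)" using IH by (simp add: PJ_def n_def)
  have ins: "{n - 1..N} = insert (n - 1) {n..N}" using n2 by auto
  define K where "K = (\<lambda>\<omega>. distr (step_kernel x0 eta xi tau n (\<omega> n)) (path_space {n - 1..N} :: (nat \<Rightarrow> 'd \<Rightarrow> real) measure) (\<lambda>y. fun_upd \<omega> (n - 1) y))"
  have Kmeas0: "K \<in> measurable (path_space {n..N}) (subprob_algebra (path_space {n - 1..N}))"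
    unfolding K_def ins using Kj_meas[of eta tau n "n - 1" "{n..N}" x0 xi] s0 n2 by (simp add: s_def)
  then have Kmeas: "K \<in> measurable PJ (subprob_algebra (path_space {n - 1..N}))"
    by (simp cong: measurable_cong_sets add: setsPJ)
  have PJS: "partial_joint x0 eta xi tau N (Suc j) = PJ \<bind> K"
    by (simp add: PJ_def K_def n_def)
  have Spos: "prob_space (step_kernel x0 eta xi tau n x)" for x
    unfolding step_eq by (rule prob_gauss) (use s0 in \<open>simp add: s_def\<close>)
  have Ssets: "sets (step_kernel x0 eta xi tau n x) = sets vec_space" for x
    by (simp add: step_eq)
  have upd_meas: "(\<lambda>y. fun_upd \<omega> (n - 1) y) \<in> measurable vec_space (path_space {n - 1..N})"
    if "\<omega> \<in> space (path_space {n..N} :: (nat \<Rightarrow> 'd \<Rightarrow> real) measure)" for \<omega> :: "nat \<Rightarrow> 'd \<Rightarrow> real"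
  proof -
    have "(\<lambda>y. fun_upd ((\<lambda>_. \<omega>) y) (n - 1) y) \<in> measurable vec_space (PiM {n - 1..N} (\<lambda>_. vec_space))"
      by (rule measurable_fun_upd[where J="{n..N}"]) (use that ins in \<open>auto simp: path_space_def\<close>)
    then show ?thesis by (simp add: path_space_def)
  qed
  have prob: "prob_space (PJ \<bind> K)"
  proof (rule PJ.prob_space_bind[OF _ Kmeas])
    show "AE x in PJ. prob_space (K x)"
    proof (rule AE_I2)
      fix x assume "x \<in> space PJ"
      then have "x \<in> space (path_space {n..N} :: (nat \<Rightarrow> 'd \<Rightarrow> real) measure)" using sets_eq_imp_space_eq[OF setsPJ] by simp
      then have "(\<lambda>y. fun_upd x (n - 1) y) \<in> measurable (step_kernel x0 eta xi tau n (x n)) (path_space {n - 1..N})"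
        using upd_meas measurable_cong_sets[OF Ssets refl] by blast
      then show "prob_space (K x)" unfolding K_def
        by (intro prob_space.prob_space_distr Spos)
    qed
  qed
  have sets: "sets (PJ \<bind> K) = sets (path_space {n - 1..N} :: (nat \<Rightarrow> 'd \<Rightarrow> real) measure)"
    by (rule sets_bind[OF _ PJ.not_empty]) (use Kmeas in \<open>rule sets_kernel\<close>)
  have marg: "distr (PJ \<bind> K) vec_space (\<lambda>\<omega>. \<omega> m) = PJ \<bind> (\<lambda>\<omega>. distr (K \<omega>) vec_space (\<lambda>\<omega>. \<omega> m))"
    if "m \<in> {n - 1..N}" for m
    by (rule distr_bind[OF Kmeas PJ.not_empty]) (use that in \<open>simp add: path_space_def\<close>)
  have old: "distr (PJ \<bind> K) vec_space (\<lambda>\<omega>. \<omega> m) = distr PJ vec_space (\<lambda>\<omega>. \<omega> m)"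
    if m: "m \<in> {n..N}" for m
  proof -
    have "PJ \<bind> (\<lambda>\<omega>. distr (K \<omega>) vec_space (\<lambda>\<omega>. \<omega> m)) = PJ \<bind> (\<lambda>\<omega>. return vec_space (\<omega> m))"
    proof (rule bind_cong_All, intro ballI)
      fix \<omega> assume w: "\<omega> \<in> space PJ"
      then have w': "\<omega> \<in> space (path_space {n..N} :: (nat \<Rightarrow> 'd \<Rightarrow> real) measure)" using sets_eq_imp_space_eq[OF setsPJ] by simp
      interpret S: prob_space "step_kernel x0 eta xi tau n (\<omega> n)" by (rule Spos)
      have mn: "m \<noteq> n - 1" using m n2 by auto
      have "distr (K \<omega>) vec_space (\<lambda>\<omega>. \<omega> m) = distr (step_kernel x0 eta xi tau n (\<omega> n)) vec_space (\<lambda>y. \<omega> m)"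
        unfolding K_def
        by (subst distr_distr) (use upd_meas[OF w'] m n2 mn in \<open>auto simp: comp_def path_space_def cong: measurable_cong_sets simp: Ssets\<close>)
      also have "\<dots> = return vec_space (\<omega> m)" by simp
      finally show "distr (K \<omega>) vec_space (\<lambda>\<omega>. \<omega> m) = return vec_space (\<omega> m)" .
    qed
    also have "\<dots> = distr PJ vec_space (\<lambda>\<omega>. \<omega> m)"
      by (rule bind_return_distr'[OF PJ.not_empty]) (use m in \<open>simp add: setsPJ path_space_def cong: measurable_cong_sets\<close>)
    finally show ?thesis using marg m by auto
  qed
  have new: "distr (PJ \<bind> K) vec_space (\<lambda>\<omega>. \<omega> (n - 1)) = gauss x0 (tau (n - 1))"
  proof -
    have "PJ \<bind> (\<lambda>\<omega>. distr (K \<omega>) vec_space (\<lambda>\<omega>. \<omega> (n - 1))) = PJ \<bind> (\<lambda>\<omega>. step_kernel x0 eta xi tau n (\<omega> n))"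
    proof (rule bind_cong_All, intro ballI)
      fix \<omega> assume w: "\<omega> \<in> space PJ"
      then have w': "\<omega> \<in> space (path_space {n..N} :: (nat \<Rightarrow> 'd \<Rightarrow> real) measure)" using sets_eq_imp_space_eq[OF setsPJ] by simp
      have "distr (K \<omega>) vec_space (\<lambda>\<omega>. \<omega> (n - 1)) = distr (step_kernel x0 eta xi tau n (\<omega> n)) vec_space (\<lambda>y. (fun_upd \<omega> (n - 1) y) (n - 1))"
        unfolding K_def
        by (subst distr_distr) (use upd_meas[OF w'] n2 in \<open>auto simp: comp_def path_space_def cong: measurable_cong_sets simp: Ssets\<close>)
      also have "\<dots> = distr (step_kernel x0 eta xi tau n (\<omega> n)) vec_space (\<lambda>y. y)"
        by simp
      also have "\<dots> = step_kernel x0 eta xi tau n (\<omega> n)" by (rule distr_id2) (simp add: Ssets)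
      finally show "distr (K \<omega>) vec_space (\<lambda>\<omega>. \<omega> (n - 1)) = step_kernel x0 eta xi tau n (\<omega> n)" .
    qed
    also have "\<dots> = distr PJ vec_space (\<lambda>\<omega>. \<omega> n) \<bind> (\<lambda>x. step_kernel x0 eta xi tau n x)"
      by (rule bind_distr[symmetric])
         (use n2 kernV_meas[OF s0, of x0 c] PJ.not_empty in \<open>auto simp: setsPJ path_space_def step_eq c_def s_def cong: measurable_cong_sets\<close>)
    also have "distr PJ vec_space (\<lambda>\<omega>. \<omega> n) = gauss x0 (tau n)"
      using IH by (simp add: PJ_def n_def)
    also have "gauss x0 (tau n) \<bind> (\<lambda>x. step_kernel x0 eta xi tau n x) = gauss x0 (sqrt ((c * tau n)\<^sup>2 + s\<^sup>2))"
      unfolding step_eq c_def[symmetric] s_def[symmetric] by (rule core) (use tn s0 in auto)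
    also have "sqrt ((c * tau n)\<^sup>2 + s\<^sup>2) = tau (n - 1)"
    proof -
      have xi2: "xi\<^sup>2 = 1" using xi by auto
      have e: "1 - eta\<^sup>2 \<ge> 0" using eta power_le_one[of eta 2] by simp
      have "(c * tau n)\<^sup>2 + s\<^sup>2 = (tau (n - 1))\<^sup>2"
        using tn e xi2 by (simp add: c_def s_def power_mult_distrib power_divide field_simps)
      then show ?thesis using tn by simp
    qed
    finally show ?thesis using marg[of "n - 1"] n2 by auto
  qed
  show ?case
  proof (intro conjI allI impI)
    show "prob_space (partial_joint x0 eta xi tau N (Suc j))" using prob PJS by simp
    show "sets (partial_joint x0 eta xi tau N (Suc j)) = sets (path_space {N - Suc j..N})" using sets PJS nm by simp
    fix k assume k: "k \<le> Suc j"
    show "distr (partial_joint x0 eta xi tau N (Suc j)) vec_space (\<lambda>\<omega>. \<omega> (N - k)) = gauss x0 (tau (N - k))"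
    proof (cases "k = Suc j")
      case True then show ?thesis using new PJS nm by simp
    next
      case False
      then have "k \<le> j" using k by simp
      then have "N - k \<in> {n..N}" using n2 by (auto simp: n_def)
      then show ?thesis using old[of "N - k"] IH \<open>k \<le> j\<close> PJS by (simp add: PJ_def)
    qed
  qed
qed

theorem proposition1:
  fixes x0 :: "'d::finite \<Rightarrow> real" and tau :: "nat \<Rightarrow> real"
    and N :: nat and eta xi :: real
  assumes "N \<ge> 1"
    and "\<forall>n\<in>{1..N}. tau n > 0"
    and "\<forall>m n. 1 \<le> m \<and> m < n \<and> n \<le> N \<longrightarrow> tau m < tau n"
    and "0 \<le> eta" and "eta \<le> 1"
    and "xi \<in> {-1, 1}"
  shows "\<forall>n\<in>{1..N}. marginal x0 eta xi tau N n = gauss x0 (tau n)"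
proof
  fix n assume n: "n \<in> {1..N}"
  have H: "\<forall>k\<le>N - 1. distr (partial_joint x0 eta xi tau N (N - 1)) vec_space (\<lambda>\<omega>. \<omega> (N - k)) = gauss x0 (tau (N - k))"
    using main_ind[where ?x0.0=x0 and j="N - 1", OF assms(2) assms(4) assms(5) assms(6) assms(1)] by blast
  have "N - n \<le> N - 1" "N - (N - n) = n" using n by auto
  then show "marginal x0 eta xi tau N n = gauss x0 (tau n)"
    using H[rule_format, of "N - n"] by (simp add: marginal_def joint_def)
qed

end
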